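(* Let $r_n$ ($n\ge 0$) denote the parity of the number of runs of $1$'s in the binary representation of $n$, and for $k\ge 0$ let $R_k$ denote the finite word $r_0r_1\cdots r_{2^k-1}$ consisting of the first $2^k$ terms. Then $R_1=01$, and for every $k\ge 1$ we have the concatenation $R_{k+1}=R_kS_k$, where $S_k$ is the word obtained from $R_k$ by replacing each of its first $2^{k-1}$ letters $x$ by $1-x$ and leaving the remaining $2^{k-1}$ letters unchanged.
   Context: A run of $1$'s in the binary representation of $n$ is a maximal block of consecutive binary digits equal to $1$; parity means the number modulo $2$, so $r_n\in\{0,1\}$. *)

theory Defs
  imports Main
begin

definition bdigit :: "nat \<Rightarrow> nat \<Rightarrow> nat" where
  "bdigit n i = n div 2 ^ i mod 2"

(* number of maximal blocks of 1's in the binary representation of n: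
   count positions i where a block starts (reading from least significant end),
   i.e. digit i is 1 and the next less significant digit is 0 (or absent).
   Only positions i < n + 1 can carry a 1 digit. *)
definition num_runs :: "nat \<Rightarrow> nat" where
  "num_runs n = card {i. i \<le> n \<and> bdigit n i = 1 \<and> (i = 0 \<or> bdigit n (i - 1) = 0)}"

definition r :: "nat \<Rightarrow> nat" where
  "r n = num_runs n mod 2"

definition RR :: "nat \<Rightarrow> nat list" where
  "RR k = map r [0..<2 ^ k]"

definition SS :: "nat \<Rightarrow> nat list" where
  "SS k = map (\<lambda>x. 1 - x) (take (2 ^ (k - 1)) (RR k)) @ drop (2 ^ (k - 1)) (RR k)"

end

theory Submission
  imports Defs
begin

definition SR :: "nat \<Rightarrow> nat set" where
  "SR n = {i. bdigit n i = 1 \<and> (i = 0 \<or> bdigit n (i - 1) = 0)}"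

lemma bdigit_le: "bdigit n i = 1 \<Longrightarrow> i \<le> n"
proof (rule ccontr)
  assume "bdigit n i = 1" "\<not> i \<le> n"
  hence "(2::nat)^n \<le> 2^i" by (intro power_increasing) auto
  hence "n < 2 ^ i" using less_exp[of n] by linarith
  hence "n div 2 ^ i = 0" by simp
  thus False using \<open>bdigit n i = 1\<close> by (simp add: bdigit_def)
qed

lemma num_runs_SR: "num_runs n = card (SR n)"
  unfolding num_runs_def SR_def using bdigit_le by metis

lemma bd_low: assumes "i < k" shows "bdigit (2^k + n) i = bdigit n i"
proof -
  have "(2::nat)^k = 2^i * 2^(k-i)" using assms by (simp add: power_add[symmetric])
  hence "(2^k + n) div 2^i = 2^(k-i) + n div 2^i" by simp
  moreover have "even ((2::nat)^(k-i))" using assms by simp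
  then obtain c where "(2::nat)^(k-i) = 2*c" by (rule evenE)
  ultimately show ?thesis unfolding bdigit_def by simp
qed

lemma bd_k: assumes "n < 2^k" shows "bdigit (2^k + n) k = 1"
proof -
  have "(2^k + n) div 2^k = n div 2^k + 1" by (rule div_add_self1) simp
  thus ?thesis using assms unfolding bdigit_def by simp
qed

lemma bd_high: assumes "n < 2^k" "k < i" shows "bdigit (2^k + n) i = 0"
proof -
  have "(2::nat)^(k+1) \<le> 2^i" using assms by (intro power_increasing) auto
  hence "2^k + n < 2^i" using assms by simp
  thus ?thesis unfolding bdigit_def by simp
qed

lemma bdn_high: assumes "n < 2^k" "k \<le> i" shows "bdigit n i = 0"
proof -
  have "(2::nat)^k \<le> 2^i" using assms by (intro power_increasing) auto
  hence "n < 2^i" using assms by linarith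
  thus ?thesis unfolding bdigit_def by simp
qed

lemma SR_n: assumes "n < 2^k" shows "SR n \<subseteq> {..<k}"
proof -
  have "bdigit n i = 1 \<Longrightarrow> i < k" for i using bdn_high[OF assms, of i] by (cases "i<k") auto
  thus ?thesis unfolding SR_def by blast
qed

lemma SR_m: assumes "n < 2^k" "k \<ge> 1"
  shows "SR (2^k + n) = SR n \<union> (if bdigit n (k-1) = 0 then {k} else {})"
proof -
  have A: "SR (2^k+n) \<inter> {..<k} = SR n"
  proof -
    have "SR (2^k+n) \<inter> {..<k} = SR n \<inter> {..<k}"
      unfolding SR_def using bd_low by auto
    thus ?thesis using SR_n[OF assms(1)] by auto
  qed
  have B: "SR (2^k+n) - {..<k} = (if bdigit n (k-1) = 0 then {k} else {})"
  proof -
    have "i \<in> SR (2^k+n) - {..<k} \<longleftrightarrow> i = k \<and> bdigit n (k-1) = 0" for i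
    proof (cases "k < i")
      case True then show ?thesis using bd_high[OF assms(1)] unfolding SR_def by auto
    next
      case False
      then show ?thesis using bd_k[OF assms(1)] bd_low[of "k-1" k n] assms(2)
        unfolding SR_def by (cases "i = k") auto
    qed
    thus ?thesis by auto
  qed
  have "SR (2^k+n) = (SR (2^k+n) \<inter> {..<k}) \<union> (SR (2^k+n) - {..<k})" by auto
  thus ?thesis using A B by simp
qed

lemma suc_mod2: "Suc c mod 2 = 1 - c mod (2::nat)" by presburger

lemma r_step: assumes "n < 2^k" "k \<ge> 1"
  shows "r (2^k + n) = (if n < 2^(k-1) then 1 - r n else r n)"
proof -
  have fin: "finite (SR n)" using SR_n[OF assms(1)] finite_subset by blast
  have kn: "k \<notin> SR n" using SR_n[OF assms(1)] by auto
  have d: "bdigit n (k-1) = 0 \<longleftrightarrow> n < 2^(k-1)"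
  proof -
    have "n div 2^(k-1) < 2" using assms by (cases k) (auto simp: div_less_iff_less_mult)
    thus ?thesis unfolding bdigit_def by (auto simp: div_eq_0_iff)
  qed
  show ?thesis
    unfolding r_def num_runs_SR SR_m[OF assms] using fin kn d by (auto simp: suc_mod2)
qed

theorem theorem2:
  shows "RR 1 = [0, 1] \<and> (\<forall>k\<ge>1. RR (k + 1) = RR k @ SS k)"
proof
  show "RR 1 = [0, 1]"
  proof -
    have "SR 1 = {0}"
    proof -
      have "(1::nat) div 2^i = (if i=0 then 1 else 0)" for i
        by (cases i) (auto intro!: div_less, metis One_nat_def less_2_cases_iff mult_2 not_less_eq one_le_power trans_le_add1 le_neq_implies_less nat_1_add_1 one_less_numeral_iff semiring_norm(76) Suc_le_lessD le_add1 add_le_mono)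
      thus ?thesis unfolding SR_def bdigit_def by auto
    qed
    moreover have "SR 0 = {}" unfolding SR_def bdigit_def by auto
    ultimately show ?thesis by (simp add: RR_def r_def num_runs_SR upt_rec)
  qed
next
  show "\<forall>k\<ge>1. RR (k + 1) = RR k @ SS k"
  proof (intro allI impI)
    fix k :: nat assume k: "k \<ge> 1"
    have h: "(2::nat)^(k-1) \<le> 2^k" by simp
    have "RR (k+1) = map r [0..<2^k] @ map r [2^k..<2^k+2^k]"
      unfolding RR_def by (simp add: upt_add_eq_append[of 0 "2^k" "2^k", simplified] mult_2)
    moreover have "map r [2^k..<2^k+2^k] = SS k"
    proof (rule nth_equalityI)
      show "length (map r [2^k..<2^k+2^k]) = length (SS k)"
        unfolding SS_def RR_def using h by simp
      fix i assume "i < length (map r [2^k..<2^k+2^k])"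
      hence i: "i < 2^k" by simp
      show "map r [2^k..<2^k+2^k] ! i = SS k ! i"
      proof -
        have "k - 1 < k" using k by simp
        hence "(2::nat)^(k-1) < 2^k" by (intro power_strict_increasing) auto
        thus ?thesis using i r_step[OF i k] unfolding SS_def RR_def
          by (auto simp: nth_append min_def)
      qed
    qed
    ultimately show "RR (k + 1) = RR k @ SS k" by (simp add: RR_def)
  qed
qed

end
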